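(* There is a set $S$ and a scenario $f\in{}^{\mathbb{R}}S$ such that for every $T_3$-anonymous predictor $P:{}^{\mathbb{R}}S\to{}^{\mathbb{R}}S$, the set $\{x\in\mathbb{R}: P(f)(x)=f(x)\}$ is countable.
   Context: For a set $S$, ${}^{\mathbb{R}}S$ is the set of all functions (scenarios) $f:\mathbb{R}\to S$. A predictor is a function $P:{}^{\mathbb{R}}S\to{}^{\mathbb{R}}S$ such that for all $f,g\in{}^{\mathbb{R}}S$ and $x\in\mathbb{R}$, if $f\upharpoonright(-\infty,x)=g\upharpoonright(-\infty,x)$ then $P(f)(x)=P(g)(x)$. For a family $T$ of functions $\mathbb{R}\to\mathbb{R}$, $P$ is $T$-anonymous if $P(f\circ t)=P(f)\circ t$ for all scenarios $f$ and all $t\in T$. $T_3$ is the set of all infinitely differentiable strictly increasing bijections $\mathbb{R}\to\mathbb{R}$. *)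

theory Defs
  imports "HOL-Analysis.Analysis"
begin

definition scenario :: "'a set \<Rightarrow> (real \<Rightarrow> 'a) \<Rightarrow> bool" where
  "scenario S f \<longleftrightarrow> (\<forall>x. f x \<in> S)"

definition predictor :: "'a set \<Rightarrow> ((real \<Rightarrow> 'a) \<Rightarrow> (real \<Rightarrow> 'a)) \<Rightarrow> bool" where
  "predictor S P \<longleftrightarrow>
     (\<forall>f. scenario S f \<longrightarrow> scenario S (P f)) \<and>
     (\<forall>f g x. scenario S f \<longrightarrow> scenario S g \<longrightarrow> (\<forall>y<x. f y = g y) \<longrightarrow> P f x = P g x)"

definition anonymous :: "'a set \<Rightarrow> (real \<Rightarrow> real) set \<Rightarrow> ((real \<Rightarrow> 'a) \<Rightarrow> (real \<Rightarrow> 'a)) \<Rightarrow> bool" where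
  "anonymous S T P \<longleftrightarrow> (\<forall>f t. scenario S f \<longrightarrow> t \<in> T \<longrightarrow> P (f \<circ> t) = P f \<circ> t)"

definition smooth :: "(real \<Rightarrow> real) \<Rightarrow> bool" where
  "smooth t \<longleftrightarrow> (\<forall>n x. ((deriv ^^ n) t) differentiable (at x))"

definition T3 :: "(real \<Rightarrow> real) set" where
  "T3 = {t. smooth t \<and> strict_mono t \<and> bij t}"

end

theory Submission
  imports Defs "HOL-Computational_Algebra.Polynomial"
begin


definition psi :: "real \<Rightarrow> real" where
  "psi s = (if s > 0 then exp (- 1 / s) else 0)"

fun pp :: "nat \<Rightarrow> real poly" where
  "pp 0 = 1"
| "pp (Suc k) = [:0,0,1:] * (pp k - pderiv (pp k))"

definition dpsi :: "nat \<Rightarrow> real \<Rightarrow> real" where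
  "dpsi k s = (if s > 0 then poly (pp k) (1/s) * exp (-1/s) else 0)"

lemma dpsi0: "dpsi 0 = psi"
  by (auto simp: dpsi_def psi_def fun_eq_iff)

lemma poly_exp_lim: "((\<lambda>u::real. u * poly p u * exp (- u)) \<longlongrightarrow> 0) at_top"
proof -
  have eq: "(\<lambda>u::real. u * poly p u * exp (- u)) = (\<lambda>u. \<Sum>i\<le>degree p. coeff p i * (u ^ Suc i / exp u))"
    by (auto simp: fun_eq_iff poly_altdef sum_distrib_left sum_distrib_right exp_minus field_simps)
  have "((\<lambda>u::real. \<Sum>i\<le>degree p. coeff p i * (u ^ Suc i / exp u)) \<longlongrightarrow> (\<Sum>i\<le>degree p. coeff p i * 0)) at_top"
    by (intro tendsto_sum tendsto_mult tendsto_const tendsto_power_div_exp_0)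
  then show ?thesis unfolding eq by simp
qed

lemma dpsi_deriv_pos:
  assumes "s > 0"
  shows "(dpsi k has_real_derivative dpsi (Suc k) s) (at s)"
proof -
  have d: "((\<lambda>s. poly (pp k) (1/s) * exp (-1/s)) has_real_derivative
      poly (pderiv (pp k)) (1/s) * (- inverse (s^2)) * exp (-1/s) + poly (pp k) (1/s) * (exp (-1/s) * inverse (s^2))) (at s)"
    using assms
    by (auto intro!: derivative_eq_intros DERIV_chain2[OF poly_DERIV] simp: power2_eq_square field_simps)
  have eq: "poly (pderiv (pp k)) (1/s) * (- inverse (s^2)) * exp (-1/s) + poly (pp k) (1/s) * (exp (-1/s) * inverse (s^2))
        = dpsi (Suc k) s"
    using assms by (simp add: dpsi_def power2_eq_square field_simps)
  show ?thesis
    apply (rule has_field_derivative_transform_within_open[where S="{0<..}"])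
    using d[unfolded eq] assms by (auto simp: dpsi_def)
qed

lemma dpsi_deriv_neg:
  assumes "s < 0"
  shows "(dpsi k has_real_derivative dpsi (Suc k) s) (at s)"
proof -
  have "dpsi (Suc k) s = 0" using assms by (simp add: dpsi_def)
  then show ?thesis
    apply -
    apply (rule has_field_derivative_transform_within_open[where S="{..<0}" and f="\<lambda>_. 0"])
    using assms by (auto simp: dpsi_def)
qed

lemma dpsi_deriv_zero:
  "(dpsi k has_real_derivative dpsi (Suc k) 0) (at 0)"
proof -
  have z: "dpsi j 0 = 0" for j by (simp add: dpsi_def)
  have "((\<lambda>y. (dpsi k y - dpsi k 0) / (y - 0)) \<longlongrightarrow> 0) (at 0)"
  proof (rule filterlim_split_at)
    show "((\<lambda>y. (dpsi k y - dpsi k 0) / (y - 0)) \<longlongrightarrow> 0) (at_left 0)"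
      apply (rule tendsto_eventually)
      apply (rule eventually_mono[OF eventually_at_left_real[of "-1" 0]])
      by (auto simp: dpsi_def)
  next
    have lim: "((\<lambda>y. (\<lambda>u. u * poly (pp k) u * exp (- u)) (inverse y)) \<longlongrightarrow> 0) (at_right 0)"
      by (rule filterlim_compose[OF poly_exp_lim filterlim_inverse_at_top_right])
    show "((\<lambda>y. (dpsi k y - dpsi k 0) / (y - 0)) \<longlongrightarrow> 0) (at_right 0)"
      apply (rule Lim_transform_eventually[OF lim])
      apply (rule eventually_mono[OF eventually_at_right_real[of 0 1]])
      by (auto simp: dpsi_def field_simps)
  qed
  then show ?thesis
    by (simp add: has_field_derivative_iff z)
qed

lemma dpsi_deriv: "(dpsi k has_real_derivative dpsi (Suc k) s) (at s)"
  using dpsi_deriv_pos dpsi_deriv_neg dpsi_deriv_zero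
  by (cases "s > 0"; cases "s < 0") (auto simp: not_less)

lemma smooth_family:
  assumes "D 0 = g" "\<And>k x. (D k has_real_derivative D (Suc k) x) (at x)"
  shows "smooth g"
proof -
  have "(deriv ^^ n) g = D n" for n
  proof (induction n)
    case 0 then show ?case using assms by simp
  next
    case (Suc n)
    have "(deriv ^^ Suc n) g = deriv (D n)" by (simp add: Suc.IH)
    also have "\<dots> = D (Suc n)" using assms(2) by (auto simp: fun_eq_iff intro: DERIV_imp_deriv)
    finally show ?case .
  qed
  then show ?thesis unfolding smooth_def
    using assms(2) real_differentiable_def by metis
qed

lemma psi_nonneg: "psi s \<ge> 0" by (simp add: psi_def)
lemma psi_le1: "psi s \<le> 1" by (simp add: psi_def)
lemma psi_pos: "s > 0 \<Longrightarrow> psi s > 0" by (simp add: psi_def)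
lemma psi_mono: "s \<le> s' \<Longrightarrow> psi s \<le> psi s'"
  by (auto simp: psi_def divide_simps)

lemma dpsi_bounded: "\<exists>B. \<forall>u. \<bar>u\<bar> \<le> A \<longrightarrow> \<bar>dpsi k u\<bar> \<le> B"
proof -
  have "continuous_on (cball 0 A) (dpsi k)"
    by (meson DERIV_isCont continuous_at_imp_continuous_on dpsi_deriv)
  then have "compact (dpsi k ` cball 0 A)"
    by (intro compact_continuous_image) auto
  then obtain B where B: "\<forall>v \<in> dpsi k ` cball 0 A. norm v \<le> B"
    using compact_imp_bounded bounded_iff by metis
  have "\<forall>u. \<bar>u\<bar> \<le> A \<longrightarrow> \<bar>dpsi k u\<bar> \<le> B"
    using B by (auto simp: dist_norm)
  then show ?thesis by blast
qed




definition Fm :: "rat \<Rightarrow> (rat \<times> rat) list \<Rightarrow> real \<Rightarrow> real" where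
  "Fm q ps y = y + of_rat q + (\<Sum>pr\<leftarrow>ps. of_rat (fst pr) * psi (y - of_rat (snd pr)))"

definition Rrel :: "real \<Rightarrow> real \<Rightarrow> bool" where
  "Rrel y z \<longleftrightarrow> (\<exists>q ps. (\<forall>pr\<in>set ps. fst pr \<ge> 0) \<and> z = Fm q ps y)"

lemma Fm_mono:
  assumes "\<forall>pr\<in>set ps. fst pr \<ge> 0" "y < y'"
  shows "Fm q ps y < Fm q ps y'"
proof -
  have "(\<Sum>pr\<leftarrow>ps. of_rat (fst pr) * psi (y - of_rat (snd pr))) \<le> (\<Sum>pr\<leftarrow>ps. of_rat (fst pr) * psi (y' - of_rat (snd pr)))"
    by (rule sum_list_mono) (use assms in \<open>auto intro!: mult_left_mono psi_mono\<close>)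
  then show ?thesis using assms(2) by (simp add: Fm_def)
qed

lemma countable_fwd: "countable {z. Rrel y z}"
proof -
  have "{z. Rrel y z} \<subseteq> (\<lambda>p. Fm (fst p) (snd p) y) ` UNIV"
  proof
    fix z assume "z \<in> {z. Rrel y z}"
    then obtain q ps where "z = Fm q ps y" unfolding Rrel_def by blast
    then show "z \<in> (\<lambda>p. Fm (fst p) (snd p) y) ` UNIV" by (intro rev_image_eqI[of "(q,ps)"]) simp_all
  qed
  moreover have "countable ((\<lambda>p. Fm (fst p) (snd p) y) ` (UNIV :: (rat \<times> (rat \<times> rat) list) set))"
    by (rule countable_image) simp
  ultimately show ?thesis by (rule countable_subset)
qed

lemma countable_fiber:
  assumes "\<forall>pr\<in>set ps. fst pr \<ge> 0"
  shows "countable {y. Fm q ps y = z}"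
proof -
  let ?A = "{y. Fm q ps y = z}"
  have "?A \<subseteq> {SOME y. y \<in> ?A}"
  proof
    fix y assume y: "y \<in> ?A"
    then have s: "(SOME y. y \<in> ?A) \<in> ?A" by (rule someI)
    have "y = (SOME y. y \<in> ?A)"
    proof (rule linorder_cases[of y "SOME y. y \<in> ?A"])
      assume "y < (SOME y. y \<in> ?A)"
      from Fm_mono[OF assms this, of q] y s show ?thesis by simp
    next
      assume "y > (SOME y. y \<in> ?A)"
      from Fm_mono[OF assms this, of q] y s show ?thesis by simp
    qed
    then show "y \<in> {SOME y. y \<in> ?A}" by simp
  qed
  then show ?thesis by (rule countable_subset) simp
qed

lemma countable_bwd: "countable {y. Rrel y z}"
proof -
  let ?I = "{p :: rat \<times> (rat \<times> rat) list. \<forall>pr\<in>set (snd p). fst pr \<ge> 0}"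
  have sub: "{y. Rrel y z} \<subseteq> (\<Union>p\<in>?I. {y. Fm (fst p) (snd p) y = z})"
  proof
    fix y assume "y \<in> {y. Rrel y z}"
    then obtain q ps where "\<forall>pr\<in>set ps. fst pr \<ge> 0" "z = Fm q ps y" unfolding Rrel_def by blast
    then show "y \<in> (\<Union>p\<in>?I. {y. Fm (fst p) (snd p) y = z})"
      by (intro UN_I[of "(q,ps)"]) simp_all
  qed
  have "countable (\<Union>p\<in>?I. {y. Fm (fst p) (snd p) y = z})"
    by (intro countable_UN countable_fiber) auto
  then show ?thesis using sub countable_subset by blast
qed

definition Erel :: "(real \<times> real) set" where
  "Erel = {(y,z). Rrel y z \<or> Rrel z y}\<^sup>*"

lemma countable_rtrancl:
  assumes "\<And>y. countable (r `` {y})"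
  shows "countable (r\<^sup>* `` {y})"
proof -
  have "countable ((r ^^ n) `` {y})" for n
  proof (induction n)
    case 0 then show ?case by simp
  next
    case (Suc n)
    have "(r ^^ Suc n) `` {y} = (\<Union>x\<in>(r ^^ n) `` {y}. r `` {x})" by auto
    then show ?case using Suc assms by (simp add: countable_UN)
  qed
  then have "countable (\<Union>n. (r ^^ n) `` {y})" by (intro countable_UN) auto
  moreover have "r\<^sup>* `` {y} = (\<Union>n. (r ^^ n) `` {y})"
    by (auto simp: rtrancl_is_UN_relpow)
  ultimately show ?thesis by simp
qed

lemma countable_Erel: "countable (Erel `` {y})"
  unfolding Erel_def
proof (rule countable_rtrancl)
  fix y
  have "{(y, z). Rrel y z \<or> Rrel z y} `` {y} = {z. Rrel y z} \<union> {z. Rrel z y}" by auto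
  then show "countable ({(y, z). Rrel y z \<or> Rrel z y} `` {y})"
    using countable_fwd countable_bwd by simp
qed

lemma sym_Erel: "sym Erel"
  unfolding Erel_def by (rule sym_rtrancl) (auto simp: sym_def)

definition fv :: "real \<Rightarrow> real \<Rightarrow> real" where
  "fv y = (\<lambda>w. if (y, w) \<in> Erel then 1 else 0)"

lemma fv_eq: "Rrel y z \<Longrightarrow> fv z = fv y"
proof -
  assume r: "Rrel y z"
  have yz: "(y,z) \<in> Erel" using r unfolding Erel_def by (intro r_into_rtrancl) simp
  have zy: "(z,y) \<in> Erel" using yz sym_Erel unfolding sym_def by blast
  have "(z,w) \<in> Erel \<longleftrightarrow> (y,w) \<in> Erel" for w
    using rtrancl_trans[OF yz[unfolded Erel_def], of w] rtrancl_trans[OF zy[unfolded Erel_def], of w]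
    unfolding Erel_def by blast
  then show ?thesis by (auto simp: fv_def)
qed

lemma fv_eq_imp: "fv y = fv z \<Longrightarrow> (z, y) \<in> Erel"
proof -
  assume "fv y = fv z"
  then have "fv y y = fv z y" by simp
  moreover have "(y,y) \<in> Erel" unfolding Erel_def by simp
  ultimately show "(z,y) \<in> Erel" by (simp add: fv_def split: if_splits)
qed




lemma pick_ex:
  fixes e w \<epsilon> :: real
  assumes "0 \<le> e" "0 < w" "0 < \<epsilon>"
  shows "\<exists>\<delta>::rat. 0 \<le> (of_rat \<delta> :: real) \<and> 0 \<le> e - of_rat \<delta> * w \<and> e - of_rat \<delta> * w \<le> \<epsilon>"
proof (cases "e \<le> \<epsilon>")
  case True then show ?thesis using assms by (intro exI[of _ 0]) simp
next
  case False
  have "(e - \<epsilon>) / w < e / w" using assms by (intro divide_strict_right_mono) auto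
  then obtain \<delta> :: rat where d: "(e - \<epsilon>) / w < of_rat \<delta>" "of_rat \<delta> < e / w"
    using of_rat_dense by blast
  have "0 < (e - \<epsilon>) / w" using False assms by simp
  then have "0 \<le> (of_rat \<delta> :: real)" using d by linarith
  moreover have "of_rat \<delta> * w < e" using d(2) assms by (simp add: field_simps)
  moreover have "e - \<epsilon> < of_rat \<delta> * w" using d(1) assms by (simp add: field_simps)
  ultimately show ?thesis by (intro exI[of _ \<delta>]) simp
qed

lemma seq_ex:
  fixes x' :: real
  shows "\<exists>a::nat \<Rightarrow> rat. \<forall>n. x' - 1 / real (Suc n) < of_rat (a n) \<and> of_rat (a n) < x'"
proof -
  have "\<forall>n. \<exists>r::rat. x' - 1 / real (Suc n) < of_rat r \<and> of_rat r < x'"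
    by (intro allI of_rat_dense) simp
  then show ?thesis by metis
qed

lemma series_deriv:
  fixes dl A :: "nat \<Rightarrow> real" and y :: real
  assumes dl: "\<And>n. 0 \<le> dl n" "\<And>n. dl n \<le> (1/2)^n"
    and A: "\<And>n. \<bar>A n\<bar> \<le> K"
  shows "summable (\<lambda>n. dl n * dpsi k (y - A n))"
    "((\<lambda>z. \<Sum>n. dl n * dpsi k (z - A n)) has_real_derivative (\<Sum>n. dl n * dpsi (Suc k) (y - A n))) (at y)"
proof -
  let ?R = "\<bar>y\<bar> + 1 + K"
  obtain B0 where B0: "\<And>u. \<bar>u\<bar> \<le> ?R \<Longrightarrow> \<bar>dpsi k u\<bar> \<le> B0" using dpsi_bounded by blast
  obtain B1 where B1: "\<And>u. \<bar>u\<bar> \<le> ?R \<Longrightarrow> \<bar>dpsi (Suc k) u\<bar> \<le> B1" using dpsi_bounded by blast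
  have inS: "\<bar>z - A n\<bar> \<le> ?R" if "z \<in> ball y 1" for z n
  proof -
    have "\<bar>y - z\<bar> < 1" using that by (simp add: dist_real_def)
    then show ?thesis using A[of n] by linarith
  qed
  have bnd: "norm (dl n * g (z - A n)) \<le> (1/2)^n * B" if "\<bar>g (z - A n)\<bar> \<le> B" for g z n B
  proof -
    have "norm (dl n * g (z - A n)) = dl n * \<bar>g (z - A n)\<bar>" using dl(1)[of n] by (simp add: abs_mult)
    also have "\<dots> \<le> (1/2)^n * B"
      using dl(2)[of n] that by (rule mult_mono) simp_all
    finally show ?thesis .
  qed
  have sumM: "summable (\<lambda>n. (1/2::real)^n * B)" for B
    by (intro summable_mult2 summable_geometric) simp
  have deriv_n: "((\<lambda>z. dl n * dpsi k (z - A n)) has_field_derivative dl n * dpsi (Suc k) (z - A n)) (at z within ball y 1)" for n z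
  proof -
    have "((\<lambda>z. dpsi k (z + - A n)) has_field_derivative dpsi (Suc k) (z + - A n)) (at z)"
      by (rule DERIV_shift[of "dpsi k" _ z "- A n", THEN iffD1, OF dpsi_deriv])
    then have "((\<lambda>z. dpsi k (z - A n)) has_field_derivative dpsi (Suc k) (z - A n)) (at z)"
      by simp
    then show ?thesis by (rule has_field_derivative_at_within[OF DERIV_cmult])
  qed
  have unif: "uniformly_convergent_on (ball y 1) (\<lambda>n z. \<Sum>i<n. dl i * dpsi (Suc k) (z - A i))"
    by (rule Weierstrass_m_test'[OF _ sumM[of B1]]) (rule bnd, rule B1, rule inS)
  have s0: "summable (\<lambda>n. dl n * dpsi k (y - A n))"
    by (rule summable_comparison_test'[OF sumM[of B0], where N=0]) (rule bnd, rule B0, rule inS, simp)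
  show "summable (\<lambda>n. dl n * dpsi k (y - A n))" by (rule s0)
  show "((\<lambda>z. \<Sum>n. dl n * dpsi k (z - A n)) has_real_derivative (\<Sum>n. dl n * dpsi (Suc k) (y - A n))) (at y)"
    by (rule has_field_derivative_series'(2)[OF convex_ball deriv_n unif _ s0]) simp_all
qed




lemma construct:
  fixes x x' :: real
  shows "\<exists>t\<in>T3. t x' = x \<and> (\<forall>y<x'. Rrel y (t y))"
proof -
  obtain a :: "nat \<Rightarrow> rat" where a: "\<And>n. x' - 1 / real (Suc n) < of_rat (a n)" "\<And>n. of_rat (a n) < x'"
    using seq_ex[of x'] by blast
  define A where "A n = (of_rat (a n) :: real)" for n
  define w where "w n = psi (x' - A n)" for n
  have wpos: "0 < w n" for n using a(2)[of n] by (simp add: w_def A_def psi_pos)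
  have wle: "w n \<le> 1" for n by (simp add: w_def psi_le1)
  define eps where "eps n = w n / 2^n" for n
  have epos: "0 < eps n" for n using wpos[of n] by (simp add: eps_def)
  have eps_le: "eps n \<le> (1/2)^n" for n using wle[of n] by (simp add: eps_def power_one_over divide_right_mono)
  obtain c :: rat where c: "x - x' - w 0 < of_rat c" "of_rat c < x - x'"
    using of_rat_dense[of "x - x' - w 0" "x - x'"] wpos[of 0] by auto
  define D where "D = x - x' - of_rat c"
  have D: "0 < D" "D \<le> eps 0" using c by (auto simp: D_def eps_def)
  define pick where "pick n e = (SOME \<delta>::rat. 0 \<le> (of_rat \<delta>::real) \<and> 0 \<le> e - of_rat \<delta> * w n \<and> e - of_rat \<delta> * w n \<le> eps (Suc n))" for n e
  define es where "es = rec_nat D (\<lambda>n e. e - of_rat (pick n e) * w n)"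
  have es0: "es 0 = D" by (simp add: es_def)
  have esS: "es (Suc n) = es n - of_rat (pick n (es n)) * w n" for n by (simp add: es_def)
  have pick_ok: "0 \<le> (of_rat (pick n e)::real) \<and> 0 \<le> e - of_rat (pick n e) * w n \<and> e - of_rat (pick n e) * w n \<le> eps (Suc n)"
    if "0 \<le> e" for n e
    unfolding pick_def by (rule someI_ex, rule pick_ex[OF that wpos epos])
  have es_bnd: "0 \<le> es n \<and> es n \<le> eps n" for n
  proof (induction n)
    case 0 show ?case using D es0 by simp
  next
    case (Suc n) show ?case using pick_ok[of "es n" n] Suc esS[of n] by simp
  qed
  define dl where "dl n = (of_rat (pick n (es n)) :: real)" for n
  have dl0: "0 \<le> dl n" for n using pick_ok[of "es n" n] es_bnd[of n] by (simp add: dl_def)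
  have dlw: "dl n * w n \<le> es n" for n using pick_ok[of "es n" n] es_bnd[of n] by (simp add: dl_def)
  have dl1: "dl n \<le> (1/2)^n" for n
  proof -
    have "dl n * w n \<le> w n / 2^n" using dlw[of n] es_bnd[of n] by (simp add: eps_def)
    then have "dl n \<le> 1 / 2^n" using wpos[of n] by (simp add: field_simps)
    then show ?thesis by (simp add: power_one_over)
  qed
  have tele: "(\<Sum>i<n. dl i * w i) = D - es n" for n
    by (induction n) (simp_all add: es0 esS dl_def)
  have es_lim: "es \<longlonglongrightarrow> 0"
  proof (rule tendsto_sandwich[of "\<lambda>_. 0" es sequentially "\<lambda>n. (1/2)^n"])
    show "\<forall>\<^sub>F n in sequentially. 0 \<le> es n" by (intro always_eventually allI) (simp add: es_bnd)
    show "\<forall>\<^sub>F n in sequentially. es n \<le> (1/2)^n" by (intro always_eventually allI) (meson es_bnd eps_le order_trans)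
    show "(\<lambda>n. (1/2::real)^n) \<longlonglongrightarrow> 0" by (rule LIMSEQ_power_zero) simp
  qed simp
  have sumsD: "(\<lambda>i. dl i * w i) sums D"
  proof -
    have "(\<lambda>n. D - es n) \<longlonglongrightarrow> D - 0" by (intro tendsto_diff tendsto_const es_lim)
    then show ?thesis unfolding sums_def tele by simp
  qed
  have K: "\<bar>A n\<bar> \<le> \<bar>x'\<bar> + 1" for n
  proof -
    have "1 / real (Suc n) \<le> 1" by (simp add: field_simps)
    then have h1: "x' - 1 < A n" using a(1)[of n] unfolding A_def by linarith
    have h2: "A n < x'" using a(2)[of n] unfolding A_def .
    show ?thesis using h1 h2 by (simp add: abs_le_iff abs_if)
  qed
  define Gs where "Gs k y = (\<Sum>n. dl n * dpsi k (y - A n))" for k y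
  have Gd: "(Gs k has_real_derivative Gs (Suc k) y) (at y)" for k y
    unfolding Gs_def[abs_def] by (rule series_deriv(2)[OF dl0 dl1 K])
  have summ: "summable (\<lambda>n. dl n * psi (y - A n))" for y
    using series_deriv(1)[OF dl0 dl1 K, of 0 y] by (simp add: dpsi0)
  define t where "t y = y + of_rat c + (\<Sum>n. dl n * psi (y - A n))" for y
  define Dt where "Dt k y = (if k = 0 then y + of_rat c else if k = 1 then 1 else 0) + Gs k y" for k y
  have tDt: "Dt 0 = t" by (simp add: Dt_def t_def Gs_def dpsi0 fun_eq_iff)
  have Dtd: "(Dt k has_real_derivative Dt (Suc k) y) (at y)" for k y
  proof (cases k)
    case 0
    have e1: "Dt 0 = (\<lambda>y. (y + of_rat c) + Gs 0 y)" by (simp add: Dt_def fun_eq_iff)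
    have e2: "Dt (Suc 0) y = (1 + 0) + Gs (Suc 0) y" by (simp add: Dt_def)
    show ?thesis unfolding 0 e1 e2
      by (rule DERIV_add[OF DERIV_add[OF DERIV_ident DERIV_const] Gd])
  next
    case (Suc m)
    have e1: "Dt (Suc m) = (\<lambda>y. (if m = 0 then 1 else 0) + Gs (Suc m) y)" by (simp add: Dt_def fun_eq_iff)
    have e2: "Dt (Suc (Suc m)) y = 0 + Gs (Suc (Suc m)) y" by (simp add: Dt_def)
    show ?thesis unfolding Suc e1 e2
      by (rule DERIV_add[OF DERIV_const Gd])
  qed
  have smooth_t: "smooth t" by (rule smooth_family[OF tDt Dtd])
  have tcont: "isCont t y" for y using Dtd[of 0 y] tDt by (metis DERIV_isCont)
  have mono_t: "strict_mono t"
  proof (rule strict_monoI)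
    fix y z :: real assume yz: "y < z"
    have "(\<Sum>n. dl n * psi (y - A n)) \<le> (\<Sum>n. dl n * psi (z - A n))"
      by (rule suminf_le[OF _ summ summ]) (rule mult_left_mono[OF psi_mono dl0], use yz in simp)
    then show "t y < t z" using yz by (simp add: t_def)
  qed
  have sbnd: "0 \<le> (\<Sum>n. dl n * psi (y - A n)) \<and> (\<Sum>n. dl n * psi (y - A n)) \<le> 2" for y
  proof
    show "0 \<le> (\<Sum>n. dl n * psi (y - A n))"
      by (rule suminf_nonneg[OF summ]) (simp add: dl0 psi_nonneg)
    have g: "summable (\<lambda>n. (1/2::real)^n)" by (rule summable_geometric) simp
    have "(\<Sum>n. dl n * psi (y - A n)) \<le> (\<Sum>n. (1/2::real)^n)"
    proof (rule suminf_le[OF _ summ g])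
      fix n
      have "dl n * psi (y - A n) \<le> (1/2)^n * 1"
        by (rule mult_mono[OF dl1 psi_le1]) (simp_all add: psi_nonneg)
      then show "dl n * psi (y - A n) \<le> (1/2)^n" by simp
    qed
    also have "\<dots> = 2" by (subst suminf_geometric) simp_all
    finally show "(\<Sum>n. dl n * psi (y - A n)) \<le> 2" .
  qed
  have surj_t: "surj t"
    unfolding surj_def
  proof
    fix z :: real
    let ?lo = "z - of_rat c - 2" and ?hi = "z - of_rat c"
    have "t ?lo \<le> z" using sbnd[of ?lo] by (simp add: t_def)
    moreover have "z \<le> t ?hi" using sbnd[of ?hi] by (simp add: t_def)
    moreover have "continuous_on {?lo..?hi} t" using tcont by (simp add: continuous_at_imp_continuous_on)
    ultimately obtain y where "t y = z" using IVT'[of t ?lo z ?hi] by auto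
    then show "\<exists>y. z = t y" by metis
  qed
  have bij_t: "bij t" using mono_t surj_t by (simp add: bij_def strict_mono_imp_inj_on)
  have tT3: "t \<in> T3" using smooth_t mono_t bij_t by (simp add: T3_def)
  have tx: "t x' = x"
  proof -
    have "(\<Sum>n. dl n * psi (x' - A n)) = D" using sums_unique[OF sumsD] by (simp add: w_def)
    then show ?thesis by (simp add: t_def D_def)
  qed
  have rel: "Rrel y (t y)" if y: "y < x'" for y
  proof -
    obtain M :: nat where M: "M > 0" "inverse (real M) < x' - y"
      using ex_inverse_of_nat_less[of "x' - y"] y by auto
    have big: "y < A m" if "m \<ge> M" for m
    proof -
      have "1 / real (Suc m) \<le> inverse (real M)"
        using that M(1) by (simp add: field_simps)
      then show ?thesis using a(1)[of m] M(2) unfolding A_def by linarith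
    qed
    have "(\<Sum>n. dl n * psi (y - A n)) = (\<Sum>n\<in>{..<M}. dl n * psi (y - A n))"
    proof (rule suminf_finite)
      fix n assume "n \<notin> {..<M}"
      then have "y - A n \<le> 0" using big[of n] by simp
      then show "dl n * psi (y - A n) = 0" by (simp add: psi_def)
    qed simp
    moreover
    let ?ps = "map (\<lambda>n. (pick n (es n), a n)) [0..<M]"
    have "(\<Sum>pr\<leftarrow>?ps. of_rat (fst pr) * psi (y - of_rat (snd pr))) = (\<Sum>n\<leftarrow>[0..<M]. dl n * psi (y - A n))"
      by (simp add: comp_def dl_def A_def)
    moreover have "(\<Sum>n\<leftarrow>[0..<M]. dl n * psi (y - A n)) = (\<Sum>n\<in>{..<M}. dl n * psi (y - A n))"
      by (simp add: interv_sum_list_conv_sum_set_nat atLeast_upt)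
    moreover have "\<forall>pr\<in>set ?ps. fst pr \<ge> 0"
      using dl0 by (auto simp: dl_def)
    ultimately show ?thesis
      unfolding Rrel_def Fm_def t_def by (intro exI[of _ c] exI[of _ ?ps]) simp
  qed
  show ?thesis using tT3 tx rel by blast
qed




theorem theorem3:
  shows "\<exists>(S :: (real \<Rightarrow> real) set) f. scenario S f \<and>
           (\<forall>P. predictor S P \<and> anonymous S T3 P \<longrightarrow> countable {x. P f x = f x})"
proof -
  have sc: "scenario (range fv) g" if "\<And>y. g y \<in> range fv" for g
    using that by (simp add: scenario_def)
  have main: "countable {x. P fv x = fv x}"
    if pred: "predictor (range fv) P" and anon: "anonymous (range fv) T3 P" for P
  proof -
    have const: "P fv x = P fv x'" for x x'
    proof -
      obtain t where t: "t \<in> T3" "t x' = x" "\<forall>y<x'. Rrel y (t y)"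
        using construct[where x=x and x'=x'] by blast
      have s1: "scenario (range fv) fv" by (rule sc) simp
      have s2: "scenario (range fv) (fv \<circ> t)" by (rule sc) simp
      have an: "P (fv \<circ> t) = P fv \<circ> t" using anon s1 t(1) by (simp add: anonymous_def)
      have ag: "\<forall>y<x'. (fv \<circ> t) y = fv y" using t(3) fv_eq by simp
      have "P (fv \<circ> t) x' = P fv x'" using pred s1 s2 ag unfolding predictor_def by blast
      then show ?thesis using an t(2) by (metis comp_apply)
    qed
    show ?thesis
    proof (cases "{x. P fv x = fv x} = {}")
      case True then show ?thesis by simp
    next
      case False
      then obtain x0 where x0: "P fv x0 = fv x0" by blast
      have "{x. P fv x = fv x} \<subseteq> Erel `` {x0}"
      proof
        fix x assume "x \<in> {x. P fv x = fv x}"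
        then have "fv x = fv x0" using x0 const[of x x0] by simp
        then show "x \<in> Erel `` {x0}" using fv_eq_imp by blast
      qed
      then show ?thesis using countable_Erel countable_subset by blast
    qed
  qed
  have "scenario (range fv) fv" by (rule sc) simp
  then show ?thesis using main by blast
qed


end
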